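(* Let $q>0$ be a real number and let ${\mathbb O}({\rm SP}_q^{2|1})$ be the complex superalgebra generated by the even elements $x_+, x_-$ and the odd element $\theta$ subject to the relations $$x_+\theta = q\,\theta x_+,\quad \theta x_- = q\, x_-\theta,\quad x_-x_+ = q^{-2}x_+x_-,\quad \theta^2 = q^{1/2}(q-1)\,x_-x_+ .$$ Then there is a $\mathbb Z_2$-graded (conjugate-linear) involution $\star$ on ${\mathbb O}({\rm SP}_q^{2|1})$ determined by $$x_+^\star = q^{1/2}\,x_-,\qquad \theta^\star = {\bf i}\,\theta,\qquad x_-^\star = q^{-1/2}\,x_+ ,$$ where ${\bf i}=\sqrt{-1}$, so that ${\mathbb O}({\rm SP}_q^{2|1})$ becomes a super $\star$-algebra.
   Context: The grade of a homogeneous element $a$ is denoted $\tau(a)\in\{0,1\}$ ($x_\pm$ have grade $0$, $\theta$ has grade $1$). A $\mathbb Z_2$-graded involution (superinvolution) on an associative superalgebra ${\mathbb A}$ is a grade-preserving map $\star:{\mathbb A}\to{\mathbb A}$ with $(ab)^\star=(-1)^{\tau(a)\tau(b)}b^\star a^\star$ and $(a^\star)^\star=a$ for homogeneous $a,b$; the pair $({\mathbb A},\star)$ is then called a super $\star$-algebra. *)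

theory Defs
  imports Complex_Main
begin

datatype gen = Xp | Xm | Th

text \<open>Elements of the free associative algebra: coefficient functions on words
  (only finitely supported ones are genuine elements, see fsupp).\<close>
type_synonym fa = "gen list \<Rightarrow> complex"

definition fsupp :: "fa \<Rightarrow> bool" where
  "fsupp a \<longleftrightarrow> finite {w. a w \<noteq> 0}"

definition fadd :: "fa \<Rightarrow> fa \<Rightarrow> fa" where
  "fadd a b = (\<lambda>w. a w + b w)"

definition fsub :: "fa \<Rightarrow> fa \<Rightarrow> fa" where
  "fsub a b = (\<lambda>w. a w - b w)"

definition fscal :: "complex \<Rightarrow> fa \<Rightarrow> fa" where
  "fscal c a = (\<lambda>w. c * a w)"

definition fzero :: fa where
  "fzero = (\<lambda>w. 0)"

definition fword :: "gen list \<Rightarrow> fa" where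
  "fword u = (\<lambda>w. if w = u then 1 else 0)"

definition fmul :: "fa \<Rightarrow> fa \<Rightarrow> fa" where
  "fmul a b = (\<lambda>w. \<Sum>(u, v) \<in> {(u, v). u @ v = w}. a u * b v)"

definition rels :: "real \<Rightarrow> fa set" where
  "rels q = {
     fsub (fword [Xp, Th]) (fscal (complex_of_real q) (fword [Th, Xp])),
     fsub (fword [Th, Xm]) (fscal (complex_of_real q) (fword [Xm, Th])),
     fsub (fword [Xm, Xp]) (fscal (complex_of_real (1 / q ^ 2)) (fword [Xp, Xm])),
     fsub (fword [Th, Th]) (fscal (complex_of_real (sqrt q * (q - 1))) (fword [Xm, Xp]))}"

inductive_set idl :: "real \<Rightarrow> fa set" for q :: real where
  rel: "r \<in> rels q \<Longrightarrow> r \<in> idl q"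
| zero: "fzero \<in> idl q"
| add: "a \<in> idl q \<Longrightarrow> b \<in> idl q \<Longrightarrow> fadd a b \<in> idl q"
| scal: "a \<in> idl q \<Longrightarrow> fscal c a \<in> idl q"
| lmul: "a \<in> idl q \<Longrightarrow> fmul (fword u) a \<in> idl q"
| rmul: "a \<in> idl q \<Longrightarrow> fmul a (fword u) \<in> idl q"

text \<open>Congruence modulo the ideal = equality in the quotient algebra O(SP_q^{2|1}).\<close>
definition fcong :: "real \<Rightarrow> fa \<Rightarrow> fa \<Rightarrow> bool" where
  "fcong q a b \<longleftrightarrow> fsub a b \<in> idl q"

definition wdeg :: "gen list \<Rightarrow> nat" where
  "wdeg w = length (filter (\<lambda>g. g = Th) w) mod 2"

definition homog :: "nat \<Rightarrow> fa \<Rightarrow> bool" where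
  "homog d a \<longleftrightarrow> d < 2 \<and> fsupp a \<and> (\<forall>w. a w \<noteq> 0 \<longrightarrow> wdeg w = d)"

end

theory Submission
  imports Defs
begin

fun swp :: "gen \<Rightarrow> gen" where
  "swp Xp = Xm" | "swp Xm = Xp" | "swp Th = Th"

definition sig :: "gen list \<Rightarrow> gen list" where
  "sig w = rev (map swp w)"

definition nt :: "gen list \<Rightarrow> nat" where
  "nt w = length (filter (\<lambda>g. g = Th) w)"

fun sgn1 :: "nat \<Rightarrow> complex" where
  "sgn1 0 = 1" | "sgn1 (Suc k) = (-1) ^ k * sgn1 k"

fun gc :: "real \<Rightarrow> gen \<Rightarrow> complex" where
  "gc q Xp = complex_of_real (sqrt q)"
| "gc q Th = \<i>"
| "gc q Xm = complex_of_real (1 / sqrt q)"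

definition cW :: "real \<Rightarrow> gen list \<Rightarrow> complex" where
  "cW q w = sgn1 (nt w) * prod_list (map (gc q) w)"

definition st :: "real \<Rightarrow> fa \<Rightarrow> fa" where
  "st q a = (\<lambda>w. cW q (sig w) * cnj (a (sig w)))"

definition tw :: "nat \<Rightarrow> fa \<Rightarrow> fa" where
  "tw k a = (\<lambda>w. (-1) ^ (k * nt w) * a w)"

lemma swp_swp[simp]: "swp (swp g) = g"
  by (cases g) auto

lemma sig_sig[simp]: "sig (sig w) = w"
  by (simp add: sig_def rev_map comp_def)

lemma sig_append: "sig (u @ v) = sig v @ sig u"
  by (simp add: sig_def)

lemma swp_Th: "(swp g = Th) = (g = Th)"
  by (cases g) auto

lemma nt_sig[simp]: "nt (sig w) = nt w"
  by (induction w) (auto simp: nt_def sig_def swp_Th)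

lemma nt_append: "nt (u @ v) = nt u + nt v"
  by (simp add: nt_def)

lemma sgn1_add: "sgn1 (a + b) = (-1) ^ (a * b) * sgn1 a * sgn1 b"
  by (induction b) (auto simp: power_add algebra_simps)

lemma sgn1_sq: "sgn1 k * sgn1 k = 1"
  by (induction k) (auto simp: algebra_simps power_mult_distrib[symmetric] power_add[symmetric] 
        simp flip: power_add mult_2)

lemma cnj_sgn1[simp]: "cnj (sgn1 k) = sgn1 k"
  by (induction k) auto

lemma cW_append: "cW q (u @ v) = (-1) ^ (nt u * nt v) * cW q u * cW q v"
  by (simp add: cW_def nt_append sgn1_add)

lemma gc_inv: "q > 0 \<Longrightarrow> gc q (swp g) * cnj (gc q g) = 1"
  by (cases g) (auto simp flip: of_real_mult)

lemma prod_inv: "q > 0 \<Longrightarrow> prod_list (map (gc q) (sig w)) * cnj (prod_list (map (gc q) w)) = 1"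
proof (induction w)
  case Nil
  then show ?case by (simp add: sig_def)
next
  case (Cons g w)
  have "prod_list (map (gc q) (sig (g # w))) * cnj (prod_list (map (gc q) (g # w)))
     = (prod_list (map (gc q) (sig w)) * cnj (prod_list (map (gc q) w))) * (gc q (swp g) * cnj (gc q g))"
    by (simp add: sig_def algebra_simps)
  also have "\<dots> = 1" using Cons gc_inv by simp
  finally show ?case .
qed

lemma cW_inv: "q > 0 \<Longrightarrow> cW q (sig w) * cnj (cW q w) = 1"
proof -
  assume q: "q > 0"
  have "cW q (sig w) * cnj (cW q w) = (sgn1 (nt w) * sgn1 (nt w)) *
     (prod_list (map (gc q) (sig w)) * cnj (prod_list (map (gc q) w)))"
    by (simp add: cW_def algebra_simps)
  then show ?thesis using prod_inv[OF q] sgn1_sq by simp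
qed


lemma st_fword: "st q (fword u) = fscal (cW q u) (fword (sig u))"
  by (rule ext) (auto simp: st_def fscal_def fword_def)

lemma st_add: "st q (fadd a b) = fadd (st q a) (st q b)"
  by (rule ext) (simp add: st_def fadd_def algebra_simps)

lemma st_sub: "st q (fsub a b) = fsub (st q a) (st q b)"
  by (rule ext) (simp add: st_def fsub_def algebra_simps)

lemma st_scal: "st q (fscal c a) = fscal (cnj c) (st q a)"
  by (rule ext) (simp add: st_def fscal_def algebra_simps)

lemma st_zero: "st q fzero = fzero"
  by (rule ext) (simp add: st_def fzero_def)

lemma st_st: "q > 0 \<Longrightarrow> st q (st q a) = a"
proof (rule ext)
  fix w assume q: "q > 0"
  have "st q (st q a) w = (cW q (sig w) * cnj (cW q w)) * a w"
    by (simp add: st_def)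
  then show "st q (st q a) w = a w" using cW_inv[OF q] by simp
qed

lemma st_fsupp: "fsupp a \<Longrightarrow> fsupp (st q a)"
proof -
  assume "fsupp a"
  then have "finite (sig ` {w. a w \<noteq> 0})" unfolding fsupp_def by simp
  moreover have "{w. st q a w \<noteq> 0} \<subseteq> sig ` {w. a w \<noteq> 0}"
  proof
    fix w assume "w \<in> {w. st q a w \<noteq> 0}"
    then have "a (sig w) \<noteq> 0" by (auto simp: st_def)
    then show "w \<in> sig ` {w. a w \<noteq> 0}" by (metis (mono_tags) image_eqI mem_Collect_eq sig_sig)
  qed
  ultimately show ?thesis unfolding fsupp_def by (rule finite_subset[rotated])
qed

lemma st_mul: "st q (fmul a b) w =
   (\<Sum>(x, y) \<in> {(x, y). x @ y = w}. (-1) ^ (nt x * nt y) * st q b x * st q a y)"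
proof -
  have "st q (fmul a b) w = (\<Sum>(u, v) \<in> {(u, v). u @ v = sig w}. cW q (sig w) * cnj (a u) * cnj (b v))"
    by (simp add: st_def fmul_def sum_distrib_left case_prod_beta mult.assoc)
  also have "\<dots> = (\<Sum>(x, y) \<in> {(x, y). x @ y = w}. (-1) ^ (nt x * nt y) * st q b x * st q a y)"
  proof (rule sum.reindex_bij_witness[where i = "\<lambda>(u, v). (sig v, sig u)" and j = "\<lambda>(x, y). (sig y, sig x)"])
    fix p assume "p \<in> {(x, y). x @ y = w}"
    then show "(\<lambda>(u, v). (sig v, sig u)) ((\<lambda>(x, y). (sig y, sig x)) p) = p" by (auto simp: case_prod_beta)
  next
    fix p assume "p \<in> {(x, y). x @ y = w}"
    then show "(\<lambda>(x, y). (sig y, sig x)) p \<in> {(u, v). u @ v = sig w}"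
      by (auto simp: case_prod_beta sig_append)
  next
    fix p assume "p \<in> {(u, v). u @ v = sig w}"
    then show "(\<lambda>(x, y). (sig y, sig x)) ((\<lambda>(u, v). (sig v, sig u)) p) = p" by (auto simp: case_prod_beta)
  next
    fix p assume "p \<in> {(u, v). u @ v = sig w}"
    then have "sig (fst p @ snd p) = sig (sig w)" by auto
    then have "sig (snd p) @ sig (fst p) = w" by (simp add: sig_append)
    then show "(\<lambda>(u, v). (sig v, sig u)) p \<in> {(x, y). x @ y = w}"
      by (auto simp: case_prod_beta)
  next
    fix p assume "p \<in> {(u, v). u @ v = sig w}"
    then obtain u v where p: "p = (u, v)" and uv: "sig w = u @ v" by auto
    show "(case (\<lambda>(u, v). (sig v, sig u)) p of (x, y) \<Rightarrow> (-1) ^ (nt x * nt y) * st q b x * st q a y)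
       = (case p of (u, v) \<Rightarrow> cW q (sig w) * cnj (a u) * cnj (b v))"
      by (simp add: p uv st_def cW_append algebra_simps)
  qed
  finally show ?thesis .
qed


lemma tw_mul: "tw k (fmul a b) = fmul (tw k a) (tw k b)"
proof (rule ext)
  fix w
  show "tw k (fmul a b) w = fmul (tw k a) (tw k b) w"
    unfolding tw_def fmul_def sum_distrib_left
    by (rule sum.cong) (auto simp: nt_append power_add add_mult_distrib2 algebra_simps)
qed

lemma tw_fword: "tw k (fword u) = fscal ((-1) ^ (k * nt u)) (fword u)"
  by (rule ext) (simp add: tw_def fscal_def fword_def)

lemma fmul_scal_l: "fmul (fscal c a) b = fscal c (fmul a b)"
  by (rule ext) (simp add: fmul_def fscal_def sum_distrib_left case_prod_beta algebra_simps)

lemma fmul_scal_r: "fmul a (fscal c b) = fscal c (fmul a b)"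
  by (rule ext) (simp add: fmul_def fscal_def sum_distrib_left case_prod_beta algebra_simps)

lemma rel_form: "r \<in> rels q \<Longrightarrow> \<exists>u1 u2 c. r = fsub (fword u1) (fscal c (fword u2)) \<and> nt u1 mod 2 = nt u2 mod 2"
  unfolding rels_def
  apply (elim insertE emptyE; hypsubst)
  apply (rule exI, rule exI, rule exI, rule conjI, rule refl, simp add: nt_def)+
  done

lemma neg1_pow_mod: "((-1::complex) ^ n) = (-1) ^ (n mod 2)"
  by (metis neg_one_even_power neg_one_odd_power mod2_eq_if odd_iff_mod_2_eq_one power_one_right power_0)

lemma tw_idl: "a \<in> idl q \<Longrightarrow> tw k a \<in> idl q"
proof (induction rule: idl.induct)
  case (rel r)
  then obtain u1 u2 c where r: "r = fsub (fword u1) (fscal c (fword u2))" and m: "nt u1 mod 2 = nt u2 mod 2"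
    using rel_form by blast
  have e: "((-1::complex) ^ (k * nt u2)) = (-1) ^ (k * nt u1)"
    using m by (metis mod_mult_right_eq neg1_pow_mod)
  have "tw k r = fscal ((-1) ^ (k * nt u1)) r"
    by (rule ext) (auto simp: r tw_def fsub_def fscal_def fword_def e algebra_simps)
  then show ?case using rel idl.rel idl.scal by metis
next
  case zero
  have "tw k fzero = fzero" by (rule ext) (simp add: tw_def fzero_def)
  then show ?case using idl.zero by simp
next
  case (add a b)
  have "tw k (fadd a b) = fadd (tw k a) (tw k b)" by (rule ext) (simp add: tw_def fadd_def algebra_simps)
  then show ?case using add idl.add by simp
next
  case (scal a c)
  have "tw k (fscal c a) = fscal c (tw k a)" by (rule ext) (simp add: tw_def fscal_def algebra_simps)
  then show ?case using scal idl.scal by simp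
next
  case (lmul a u)
  show ?case using lmul idl.lmul idl.scal by (simp add: tw_mul tw_fword fmul_scal_l)
next
  case (rmul a u)
  show ?case using rmul idl.rmul idl.scal by (simp add: tw_mul tw_fword fmul_scal_r)
qed


lemma st_fword_pt: "st q (fword u) y = (if y = sig u then cW q u else 0)"
  by (simp only: st_fword) (auto simp: fscal_def fword_def)

lemma st_lmul: "st q (fmul (fword u) a) = fmul (tw (nt u) (st q a)) (st q (fword u))"
proof (rule ext)
  fix w
  show "st q (fmul (fword u) a) w = fmul (tw (nt u) (st q a)) (st q (fword u)) w"
    unfolding st_mul unfolding fmul_def tw_def
    by (rule sum.cong) (auto simp: st_fword_pt mult.commute)
qed

lemma st_rmul: "st q (fmul a (fword u)) = fmul (st q (fword u)) (tw (nt u) (st q a))"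
proof (rule ext)
  fix w
  show "st q (fmul a (fword u)) w = fmul (st q (fword u)) (tw (nt u) (st q a)) w"
    unfolding st_mul unfolding fmul_def tw_def
    by (rule sum.cong) (auto simp: st_fword_pt mult.commute)
qed

lemma sgn1_2[simp]: "sgn1 2 = -1"
  by (simp add: numeral_2_eq_2)

lemma st_rel: "q > 0 \<Longrightarrow> r \<in> rels q \<Longrightarrow> st q r \<in> idl q"
proof -
  assume q: "q > 0" and r: "r \<in> rels q"
  define r1 where "r1 = fsub (fword [Xp, Th]) (fscal (complex_of_real q) (fword [Th, Xp]))"
  define r2 where "r2 = fsub (fword [Th, Xm]) (fscal (complex_of_real q) (fword [Xm, Th]))"
  define r3 where "r3 = fsub (fword [Xm, Xp]) (fscal (complex_of_real (1 / q ^ 2)) (fword [Xp, Xm]))"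
  define r4 where "r4 = fsub (fword [Th, Th]) (fscal (complex_of_real (sqrt q * (q - 1))) (fword [Xm, Xp]))"
  have R: "r1 \<in> idl q" "r2 \<in> idl q" "r3 \<in> idl q" "r4 \<in> idl q"
    by (auto intro!: idl.rel simp: rels_def r1_def r2_def r3_def r4_def)
  have q0: "q \<noteq> 0" using q by simp
  have sq: "complex_of_real (sqrt q) * complex_of_real (1 / sqrt q) = 1"
    using q by (simp flip: of_real_mult)
  have "st q r1 = fscal (complex_of_real (sqrt q) * \<i>) r2"
    by (rule ext) (simp only: r1_def r2_def st_sub st_scal st_fword, auto simp: cW_def nt_def sig_def fsub_def fscal_def fword_def)
  moreover have "st q r2 = fscal (complex_of_real (1 / sqrt q) * \<i>) r1"
    by (rule ext) (simp only: r1_def r2_def st_sub st_scal st_fword, auto simp: cW_def nt_def sig_def fsub_def fscal_def fword_def)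
  moreover have "st q r3 = r3"
    by (rule ext) (simp only: r3_def st_sub st_scal st_fword, auto simp: cW_def nt_def sig_def fsub_def fscal_def fword_def sq q0 algebra_simps)
  moreover have "st q r4 = r4"
    by (rule ext) (simp only: r4_def st_sub st_scal st_fword, auto simp: cW_def nt_def sig_def fsub_def fscal_def fword_def sq q0 algebra_simps)
  ultimately show ?thesis using r R idl.scal unfolding rels_def r1_def[symmetric] r2_def[symmetric] r3_def[symmetric] r4_def[symmetric]
    by auto
qed


lemma st_idl: assumes q: "q > 0" shows "a \<in> idl q \<Longrightarrow> st q a \<in> idl q"
proof (induction rule: idl.induct)
  case (rel r)
  then show ?case using st_rel q by blast
next
  case zero
  then show ?case by (simp add: st_zero idl.zero)
next
  case (add a b)
  then show ?case by (simp add: st_add idl.add)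
next
  case (scal a c)
  then show ?case by (simp add: st_scal idl.scal)
next
  case (lmul a u)
  then show ?case by (simp add: st_lmul st_fword fmul_scal_r idl.scal idl.rmul tw_idl)
next
  case (rmul a u)
  then show ?case by (simp add: st_rmul st_fword fmul_scal_l idl.scal idl.lmul tw_idl)
qed

lemma fcong_refl: "fcong q a a"
proof -
  have "fsub a a = fzero" by (rule ext) (simp add: fsub_def fzero_def)
  then show ?thesis by (simp add: fcong_def idl.zero)
qed

lemma st_homog: "homog d a \<Longrightarrow> homog d (st q a)"
proof -
  assume h: "homog d a"
  then have "fsupp (st q a)" by (simp add: homog_def st_fsupp)
  moreover have "\<forall>w. st q a w \<noteq> 0 \<longrightarrow> wdeg w = d"
  proof (intro allI impI)
    fix w assume "st q a w \<noteq> 0"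
    then have "a (sig w) \<noteq> 0" by (auto simp: st_def)
    then have "wdeg (sig w) = d" using h by (simp add: homog_def)
    moreover have "wdeg (sig w) = wdeg w" using nt_sig[of w] by (simp add: wdeg_def nt_def)
    ultimately show "wdeg w = d" by simp
  qed
  ultimately show ?thesis using h by (simp add: homog_def)
qed

lemma homog_nt: "homog d a \<Longrightarrow> a w \<noteq> 0 \<Longrightarrow> nt w mod 2 = d"
  by (simp add: homog_def wdeg_def nt_def)

lemma st_mul_homog: "homog da a \<Longrightarrow> homog db b \<Longrightarrow>
   st q (fmul a b) = fscal ((-1) ^ (da * db)) (fmul (st q b) (st q a))"
proof (rule ext)
  fix w
  assume ha: "homog da a" and hb: "homog db b"
  have ha': "homog da (st q a)" and hb': "homog db (st q b)" using ha hb st_homog by auto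
  have eq: "(-1::complex) ^ (nt x * nt y) * st q b x * st q a y = (-1) ^ (da * db) * (st q b x * st q a y)" for x y
  proof (cases "st q b x = 0 \<or> st q a y = 0")
    case True then show ?thesis by auto
  next
    case False
    then have "nt x mod 2 = db" "nt y mod 2 = da" using homog_nt ha' hb' by blast+
    then have "(-1::complex) ^ (nt x * nt y) = (-1) ^ (da * db)"
      by (metis mult.commute mod_mult_eq neg1_pow_mod)
    then show ?thesis by simp
  qed
  show "st q (fmul a b) w = fscal ((-1) ^ (da * db)) (fmul (st q b) (st q a)) w"
    unfolding st_mul unfolding fscal_def fmul_def sum_distrib_left
    by (rule sum.cong) (auto simp: eq)
qed

theorem proposition3p1:
  fixes q :: real
  assumes "q > 0"
  shows "\<exists>s :: fa \<Rightarrow> fa.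
    (\<forall>a. fsupp a \<longrightarrow> fsupp (s a)) \<and>
    (\<forall>a b. fcong q a b \<longrightarrow> fcong q (s a) (s b)) \<and>
    (\<forall>a b. fsupp a \<longrightarrow> fsupp b \<longrightarrow> fcong q (s (fadd a b)) (fadd (s a) (s b))) \<and>
    (\<forall>c a. fsupp a \<longrightarrow> fcong q (s (fscal c a)) (fscal (cnj c) (s a))) \<and>
    (\<forall>d a. homog d a \<longrightarrow> (\<exists>b. homog d b \<and> fcong q (s a) b)) \<and>
    (\<forall>da db a b. homog da a \<longrightarrow> homog db b \<longrightarrow>
        fcong q (s (fmul a b)) (fscal ((-1) ^ (da * db)) (fmul (s b) (s a)))) \<and>
    (\<forall>a. fsupp a \<longrightarrow> fcong q (s (s a)) a) \<and>
    fcong q (s (fword [Xp])) (fscal (complex_of_real (sqrt q)) (fword [Xm])) \<and>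
    fcong q (s (fword [Th])) (fscal \<i> (fword [Th])) \<and>
    fcong q (s (fword [Xm])) (fscal (complex_of_real (1 / sqrt q)) (fword [Xp]))"
proof (intro exI[of _ "st q"] conjI allI impI)
  show "\<And>a. fsupp a \<Longrightarrow> fsupp (st q a)" by (rule st_fsupp)
  show "\<And>a b. fcong q a b \<Longrightarrow> fcong q (st q a) (st q b)"
    using st_idl[OF assms] by (simp add: fcong_def flip: st_sub)
  show "\<And>a b. fcong q (st q (fadd a b)) (fadd (st q a) (st q b))"
    by (simp add: st_add fcong_refl)
  show "\<And>c a. fcong q (st q (fscal c a)) (fscal (cnj c) (st q a))"
    by (simp add: st_scal fcong_refl)
  show "\<And>d a. homog d a \<Longrightarrow> \<exists>b. homog d b \<and> fcong q (st q a) b"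
    using st_homog fcong_refl by blast
  show "\<And>da db a b. homog da a \<Longrightarrow> homog db b \<Longrightarrow>
        fcong q (st q (fmul a b)) (fscal ((-1) ^ (da * db)) (fmul (st q b) (st q a)))"
    by (simp add: st_mul_homog fcong_refl)
  show "\<And>a. fcong q (st q (st q a)) a"
    by (simp add: st_st[OF assms] fcong_refl)
  show "fcong q (st q (fword [Xp])) (fscal (complex_of_real (sqrt q)) (fword [Xm]))"
    by (simp add: st_fword cW_def nt_def sig_def fcong_refl)
  show "fcong q (st q (fword [Th])) (fscal \<i> (fword [Th]))"
    by (simp add: st_fword cW_def nt_def sig_def fcong_refl)
  show "fcong q (st q (fword [Xm])) (fscal (complex_of_real (1 / sqrt q)) (fword [Xp]))"
    by (simp add: st_fword cW_def nt_def sig_def fcong_refl)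
qed

end
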